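(* Let $\mathcal{C}$ be a deflation-exact category and let $\mathcal{A}$ be a non-empty full subcategory of $\mathcal{C}$ satisfying axiom (A3). Let $g\colon Y\to Z$ be a morphism which has a kernel belonging to $\mathcal{A}$, and suppose there exists a deflation $f\colon X\twoheadrightarrow Y$ such that $gf$ is also a deflation. Then $g$ is a deflation.
   Context: A conflation category is an additive category with a class of kernel-cokernel pairs (closed under isomorphisms) called conflations; first map an inflation, second a deflation. A deflation-exact category is a conflation category satisfying: (R0) $1_0$ is a deflation; (R1) composites of deflations are deflations; (R2) pullbacks of deflations along arbitrary morphisms exist and are deflations. Axiom (A3) for a full subcategory $\mathcal{A}$: if $a\colon C\rightarrowtail D$ is an inflation and $b\colon C\twoheadrightarrow A$ is a deflation with $A\in\mathcal{A}$, then the pushout of $a$ along $b$ exists and in the pushout square the map $D\to P$ is a deflation and $A\to P$ is an inflation. *)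

theory Defs
  imports Main
begin

text \<open>A category with additive structure, given by explicit data: objects,
morphisms, domain, codomain, identities, composition (cmp g f = g o f),
addition of parallel morphisms and zero morphisms.\<close>

record ('o, 'm) cat =
  Obj :: "'o set"
  Mor :: "'m set"
  dom :: "'m \<Rightarrow> 'o"
  cod :: "'m \<Rightarrow> 'o"
  idm :: "'o \<Rightarrow> 'm"
  cmp :: "'m \<Rightarrow> 'm \<Rightarrow> 'm"
  add :: "'m \<Rightarrow> 'm \<Rightarrow> 'm"
  zer :: "'o \<Rightarrow> 'o \<Rightarrow> 'm"

definition hom :: "('o, 'm, 'x) cat_scheme \<Rightarrow> 'o \<Rightarrow> 'o \<Rightarrow> 'm set" where
  "hom C a b = {f \<in> Mor C. dom C f = a \<and> cod C f = b}"

definition category :: "('o, 'm, 'x) cat_scheme \<Rightarrow> bool" where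
  "category C \<longleftrightarrow>
     (\<forall>f\<in>Mor C. dom C f \<in> Obj C \<and> cod C f \<in> Obj C) \<and>
     (\<forall>a\<in>Obj C. idm C a \<in> hom C a a) \<and>
     (\<forall>f\<in>Mor C. \<forall>g\<in>Mor C. dom C g = cod C f \<longrightarrow> cmp C g f \<in> hom C (dom C f) (cod C g)) \<and>
     (\<forall>f\<in>Mor C. cmp C (idm C (cod C f)) f = f \<and> cmp C f (idm C (dom C f)) = f) \<and>
     (\<forall>f\<in>Mor C. \<forall>g\<in>Mor C. \<forall>h\<in>Mor C. dom C g = cod C f \<longrightarrow> dom C h = cod C g \<longrightarrow>
        cmp C h (cmp C g f) = cmp C (cmp C h g) f)"

definition preadditive :: "('o, 'm, 'x) cat_scheme \<Rightarrow> bool" where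
  "preadditive C \<longleftrightarrow> category C \<and>
     (\<forall>a\<in>Obj C. \<forall>b\<in>Obj C.
        zer C a b \<in> hom C a b \<and>
        (\<forall>f\<in>hom C a b. \<forall>g\<in>hom C a b. add C f g \<in> hom C a b) \<and>
        (\<forall>f\<in>hom C a b. \<forall>g\<in>hom C a b. \<forall>h\<in>hom C a b. add C (add C f g) h = add C f (add C g h)) \<and>
        (\<forall>f\<in>hom C a b. \<forall>g\<in>hom C a b. add C f g = add C g f) \<and>
        (\<forall>f\<in>hom C a b. add C f (zer C a b) = f) \<and>
        (\<forall>f\<in>hom C a b. \<exists>g\<in>hom C a b. add C f g = zer C a b)) \<and>
     (\<forall>a\<in>Obj C. \<forall>b\<in>Obj C. \<forall>c\<in>Obj C.
        (\<forall>f\<in>hom C a b. \<forall>g\<in>hom C a b. \<forall>h\<in>hom C b c.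
            cmp C h (add C f g) = add C (cmp C h f) (cmp C h g)) \<and>
        (\<forall>f\<in>hom C a b. \<forall>g\<in>hom C b c. \<forall>h\<in>hom C b c.
            cmp C (add C g h) f = add C (cmp C g f) (cmp C h f)))"

definition zero_object :: "('o, 'm, 'x) cat_scheme \<Rightarrow> 'o \<Rightarrow> bool" where
  "zero_object C z \<longleftrightarrow> z \<in> Obj C \<and>
     (\<forall>a\<in>Obj C. hom C z a = {zer C z a} \<and> hom C a z = {zer C a z})"

definition is_biproduct ::
  "('o, 'm, 'x) cat_scheme \<Rightarrow> 'o \<Rightarrow> 'o \<Rightarrow> 'o \<Rightarrow> 'm \<Rightarrow> 'm \<Rightarrow> 'm \<Rightarrow> 'm \<Rightarrow> bool" where
  "is_biproduct C a b p i1 i2 p1 p2 \<longleftrightarrow> p \<in> Obj C \<and>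
     i1 \<in> hom C a p \<and> i2 \<in> hom C b p \<and> p1 \<in> hom C p a \<and> p2 \<in> hom C p b \<and>
     cmp C p1 i1 = idm C a \<and> cmp C p2 i2 = idm C b \<and>
     cmp C p1 i2 = zer C b a \<and> cmp C p2 i1 = zer C a b \<and>
     add C (cmp C i1 p1) (cmp C i2 p2) = idm C p"

definition additive :: "('o, 'm, 'x) cat_scheme \<Rightarrow> bool" where
  "additive C \<longleftrightarrow> preadditive C \<and> (\<exists>z. zero_object C z) \<and>
     (\<forall>a\<in>Obj C. \<forall>b\<in>Obj C. \<exists>p i1 i2 p1 p2. is_biproduct C a b p i1 i2 p1 p2)"

definition iso :: "('o, 'm, 'x) cat_scheme \<Rightarrow> 'm \<Rightarrow> bool" where
  "iso C f \<longleftrightarrow> f \<in> Mor C \<and>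
     (\<exists>g\<in>hom C (cod C f) (dom C f). cmp C g f = idm C (dom C f) \<and> cmp C f g = idm C (cod C f))"

definition is_kernel :: "('o, 'm, 'x) cat_scheme \<Rightarrow> 'm \<Rightarrow> 'm \<Rightarrow> bool" where
  "is_kernel C k f \<longleftrightarrow> k \<in> Mor C \<and> f \<in> Mor C \<and> cod C k = dom C f \<and>
     cmp C f k = zer C (dom C k) (cod C f) \<and>
     (\<forall>x\<in>Mor C. cod C x = dom C f \<longrightarrow> cmp C f x = zer C (dom C x) (cod C f) \<longrightarrow>
        (\<exists>!u. u \<in> hom C (dom C x) (dom C k) \<and> cmp C k u = x))"

definition is_cokernel :: "('o, 'm, 'x) cat_scheme \<Rightarrow> 'm \<Rightarrow> 'm \<Rightarrow> bool" where
  "is_cokernel C c f \<longleftrightarrow> c \<in> Mor C \<and> f \<in> Mor C \<and> dom C c = cod C f \<and>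
     cmp C c f = zer C (dom C f) (cod C c) \<and>
     (\<forall>x\<in>Mor C. dom C x = cod C f \<longrightarrow> cmp C x f = zer C (dom C f) (cod C x) \<longrightarrow>
        (\<exists>!u. u \<in> hom C (cod C c) (cod C x) \<and> cmp C u c = x))"

definition kernel_cokernel_pair :: "('o, 'm, 'x) cat_scheme \<Rightarrow> 'm \<Rightarrow> 'm \<Rightarrow> bool" where
  "kernel_cokernel_pair C i p \<longleftrightarrow> is_kernel C i p \<and> is_cokernel C p i"

definition conflation_category :: "('o, 'm, 'x) cat_scheme \<Rightarrow> ('m \<times> 'm) set \<Rightarrow> bool" where
  "conflation_category C E \<longleftrightarrow> additive C \<and>
     (\<forall>(i, p)\<in>E. kernel_cokernel_pair C i p) \<and>
     (\<forall>i p i' p'. (i, p) \<in> E \<longrightarrow> i' \<in> Mor C \<longrightarrow> p' \<in> Mor C \<longrightarrow> cod C i' = dom C p' \<longrightarrow>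
        (\<exists>\<alpha> \<beta> \<gamma>. iso C \<alpha> \<and> iso C \<beta> \<and> iso C \<gamma> \<and>
           \<alpha> \<in> hom C (dom C i) (dom C i') \<and> \<beta> \<in> hom C (cod C i) (cod C i') \<and>
           \<gamma> \<in> hom C (cod C p) (cod C p') \<and>
           cmp C i' \<alpha> = cmp C \<beta> i \<and> cmp C p' \<beta> = cmp C \<gamma> p) \<longrightarrow>
        (i', p') \<in> E)"

definition inflation :: "('o, 'm, 'x) cat_scheme \<Rightarrow> ('m \<times> 'm) set \<Rightarrow> 'm \<Rightarrow> bool" where
  "inflation C E i \<longleftrightarrow> (\<exists>p. (i, p) \<in> E)"

definition deflation :: "('o, 'm, 'x) cat_scheme \<Rightarrow> ('m \<times> 'm) set \<Rightarrow> 'm \<Rightarrow> bool" where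
  "deflation C E p \<longleftrightarrow> (\<exists>i. (i, p) \<in> E)"

text \<open>Pullback square: p' : P -> X', t' : P -> X with p t' = t p', where
p : X -> Y and t : X' -> Y, universal among such squares.\<close>
definition is_pullback ::
  "('o, 'm, 'x) cat_scheme \<Rightarrow> 'm \<Rightarrow> 'm \<Rightarrow> 'm \<Rightarrow> 'm \<Rightarrow> bool" where
  "is_pullback C p t p' t' \<longleftrightarrow>
     p \<in> Mor C \<and> t \<in> Mor C \<and> p' \<in> Mor C \<and> t' \<in> Mor C \<and>
     cod C p = cod C t \<and> dom C p' = dom C t' \<and> cod C p' = dom C t \<and> cod C t' = dom C p \<and>
     cmp C p t' = cmp C t p' \<and>
     (\<forall>x\<in>Mor C. \<forall>y\<in>Mor C. cod C x = dom C p \<longrightarrow> cod C y = dom C t \<longrightarrow> dom C x = dom C y \<longrightarrow>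
        cmp C p x = cmp C t y \<longrightarrow>
        (\<exists>!u. u \<in> hom C (dom C x) (dom C p') \<and> cmp C t' u = x \<and> cmp C p' u = y))"

text \<open>Pushout square of a : W -> D along b : W -> A: maps b' : D -> P and
a' : A -> P with b' a = a' b, universal among such squares.\<close>
definition is_pushout ::
  "('o, 'm, 'x) cat_scheme \<Rightarrow> 'm \<Rightarrow> 'm \<Rightarrow> 'm \<Rightarrow> 'm \<Rightarrow> bool" where
  "is_pushout C a b b' a' \<longleftrightarrow>
     a \<in> Mor C \<and> b \<in> Mor C \<and> b' \<in> Mor C \<and> a' \<in> Mor C \<and>
     dom C a = dom C b \<and> cod C b' = cod C a' \<and> dom C b' = cod C a \<and> dom C a' = cod C b \<and>
     cmp C b' a = cmp C a' b \<and>
     (\<forall>x\<in>Mor C. \<forall>y\<in>Mor C. dom C x = cod C a \<longrightarrow> dom C y = cod C b \<longrightarrow> cod C x = cod C y \<longrightarrow>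
        cmp C x a = cmp C y b \<longrightarrow>
        (\<exists>!u. u \<in> hom C (cod C b') (cod C x) \<and> cmp C u b' = x \<and> cmp C u a' = y))"

definition deflation_exact :: "('o, 'm, 'x) cat_scheme \<Rightarrow> ('m \<times> 'm) set \<Rightarrow> bool" where
  "deflation_exact C E \<longleftrightarrow> conflation_category C E \<and>
     \<comment> \<open>(R0)\<close>
     (\<forall>z. zero_object C z \<longrightarrow> deflation C E (idm C z)) \<and>
     \<comment> \<open>(R1)\<close>
     (\<forall>p q. deflation C E p \<longrightarrow> deflation C E q \<longrightarrow> dom C q = cod C p \<longrightarrow>
        deflation C E (cmp C q p)) \<and>
     \<comment> \<open>(R2)\<close>
     (\<forall>p t. deflation C E p \<longrightarrow> t \<in> Mor C \<longrightarrow> cod C t = cod C p \<longrightarrow>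
        (\<exists>p' t'. is_pullback C p t p' t' \<and> deflation C E p'))"

definition axiom_A3 :: "('o, 'm, 'x) cat_scheme \<Rightarrow> ('m \<times> 'm) set \<Rightarrow> 'o set \<Rightarrow> bool" where
  "axiom_A3 C E Asub \<longleftrightarrow>
     (\<forall>a b. inflation C E a \<longrightarrow> deflation C E b \<longrightarrow> dom C a = dom C b \<longrightarrow> cod C b \<in> Asub \<longrightarrow>
        (\<exists>b' a'. is_pushout C a b b' a' \<and> deflation C E b' \<and> inflation C E a'))"

end

theory Submission
  imports Defs
begin

locale dex =
  fixes C :: "('o, 'm) cat" and E :: "('m \<times> 'm) set"
  assumes dexa: "deflation_exact C E"
begin

lemma conf: "conflation_category C E" using dexa by (simp add: deflation_exact_def)
lemma add: "additive C" using conf by (simp add: conflation_category_def)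
lemma pre: "preadditive C" using add by (simp add: additive_def)
lemma cat: "category C" using pre by (simp add: preadditive_def)

lemma cat1: "\<forall>f\<in>Mor C. dom C f \<in> Obj C \<and> cod C f \<in> Obj C"
  using cat unfolding category_def by (rule conjunct1)
lemma cat2: "\<forall>a\<in>Obj C. idm C a \<in> hom C a a"
  using cat unfolding category_def by (rule conjunct1[OF conjunct2])
lemma cat3: "\<forall>f\<in>Mor C. \<forall>g\<in>Mor C. dom C g = cod C f \<longrightarrow> cmp C g f \<in> hom C (dom C f) (cod C g)"
  using cat unfolding category_def by (rule conjunct1[OF conjunct2[OF conjunct2]])
lemma cat4: "\<forall>f\<in>Mor C. cmp C (idm C (cod C f)) f = f \<and> cmp C f (idm C (dom C f)) = f"
  using cat unfolding category_def by (rule conjunct1[OF conjunct2[OF conjunct2[OF conjunct2]]])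
lemma cat5: "\<forall>f\<in>Mor C. \<forall>g\<in>Mor C. \<forall>h\<in>Mor C. dom C g = cod C f \<longrightarrow> dom C h = cod C g \<longrightarrow>
        cmp C h (cmp C g f) = cmp C (cmp C h g) f"
  using cat unfolding category_def by (rule conjunct2[OF conjunct2[OF conjunct2[OF conjunct2]]])

lemma homI: "f \<in> Mor C \<Longrightarrow> f \<in> hom C (dom C f) (cod C f)" by (simp add: hom_def)
lemma homD: "f \<in> hom C a b \<Longrightarrow> f \<in> Mor C \<and> dom C f = a \<and> cod C f = b" by (simp add: hom_def)
lemma hom_obj: "f \<in> hom C a b \<Longrightarrow> a \<in> Obj C \<and> b \<in> Obj C"
  using cat1 unfolding hom_def by auto

lemma comp_in: "f \<in> hom C a b \<Longrightarrow> g \<in> hom C b c \<Longrightarrow> cmp C g f \<in> hom C a c"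
  using cat3 unfolding hom_def by auto

lemma assoc: "f \<in> hom C a b \<Longrightarrow> g \<in> hom C b c \<Longrightarrow> h \<in> hom C c d \<Longrightarrow>
   cmp C h (cmp C g f) = cmp C (cmp C h g) f"
  using cat5 unfolding hom_def by auto

lemma id_in: "a \<in> Obj C \<Longrightarrow> idm C a \<in> hom C a a"
  using cat2 by auto

lemma idl: "f \<in> hom C a b \<Longrightarrow> cmp C (idm C b) f = f"
  using cat4 unfolding hom_def by auto
lemma idr: "f \<in> hom C a b \<Longrightarrow> cmp C f (idm C a) = f"
  using cat4 unfolding hom_def by auto

lemma preG: "\<forall>a\<in>Obj C. \<forall>b\<in>Obj C.
        zer C a b \<in> hom C a b \<and>
        (\<forall>f\<in>hom C a b. \<forall>g\<in>hom C a b. add C f g \<in> hom C a b) \<and>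
        (\<forall>f\<in>hom C a b. \<forall>g\<in>hom C a b. \<forall>h\<in>hom C a b. add C (add C f g) h = add C f (add C g h)) \<and>
        (\<forall>f\<in>hom C a b. \<forall>g\<in>hom C a b. add C f g = add C g f) \<and>
        (\<forall>f\<in>hom C a b. add C f (zer C a b) = f) \<and>
        (\<forall>f\<in>hom C a b. \<exists>g\<in>hom C a b. add C f g = zer C a b)"
  using pre unfolding preadditive_def by (rule conjunct1[OF conjunct2])
lemma preB: "\<forall>a\<in>Obj C. \<forall>b\<in>Obj C. \<forall>c\<in>Obj C.
        (\<forall>f\<in>hom C a b. \<forall>g\<in>hom C a b. \<forall>h\<in>hom C b c.
            cmp C h (add C f g) = add C (cmp C h f) (cmp C h g)) \<and>
        (\<forall>f\<in>hom C a b. \<forall>g\<in>hom C b c. \<forall>h\<in>hom C b c.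
            cmp C (add C g h) f = add C (cmp C g f) (cmp C h f))"
  using pre unfolding preadditive_def by (rule conjunct2[OF conjunct2])

lemma zer_in: "a \<in> Obj C \<Longrightarrow> b \<in> Obj C \<Longrightarrow> zer C a b \<in> hom C a b"
  using preG by blast
lemma add_inv: "a \<in> Obj C \<Longrightarrow> b \<in> Obj C \<Longrightarrow> f \<in> hom C a b \<Longrightarrow> \<exists>g\<in>hom C a b. add C f g = zer C a b"
  using preG by blast
lemma add_assoc: "a \<in> Obj C \<Longrightarrow> b \<in> Obj C \<Longrightarrow> f \<in> hom C a b \<Longrightarrow> g \<in> hom C a b \<Longrightarrow> h \<in> hom C a b \<Longrightarrow> add C (add C f g) h = add C f (add C g h)"
  using preG by blast
lemma add_zer: "a \<in> Obj C \<Longrightarrow> b \<in> Obj C \<Longrightarrow> f \<in> hom C a b \<Longrightarrow> add C f (zer C a b) = f"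
  using preG by blast
lemma distl: "a \<in> Obj C \<Longrightarrow> b \<in> Obj C \<Longrightarrow> c \<in> Obj C \<Longrightarrow> f \<in> hom C a b \<Longrightarrow> g \<in> hom C a b \<Longrightarrow> h \<in> hom C b c \<Longrightarrow> cmp C h (add C f g) = add C (cmp C h f) (cmp C h g)"
  using preB by blast
lemma distr: "a \<in> Obj C \<Longrightarrow> b \<in> Obj C \<Longrightarrow> c \<in> Obj C \<Longrightarrow> f \<in> hom C a b \<Longrightarrow> g \<in> hom C b c \<Longrightarrow> h \<in> hom C b c \<Longrightarrow> cmp C (add C g h) f = add C (cmp C g f) (cmp C h f)"
  using preB by blast

lemma zer_left:
  assumes f: "f \<in> hom C a b" and c: "c \<in> Obj C"
  shows "cmp C (zer C b c) f = zer C a c"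
proof -
  have a: "a \<in> Obj C" and b: "b \<in> Obj C" using hom_obj[OF f] by auto
  let ?z = "zer C b c"
  have z: "?z \<in> hom C b c" using zer_in b c by auto
  have zz: "add C ?z ?z = ?z" using add_zer b c z by blast
  have d: "cmp C (add C ?z ?z) f = add C (cmp C ?z f) (cmp C ?z f)"
    using distr a b c f z by blast
  have zf: "cmp C ?z f \<in> hom C a c" using comp_in f z by auto
  then obtain n where n: "n \<in> hom C a c" "add C (cmp C ?z f) n = zer C a c"
    using add_inv a c by blast
  have e: "cmp C ?z f = add C (cmp C ?z f) (cmp C ?z f)" using d zz by simp
  have "zer C a c = add C (add C (cmp C ?z f) (cmp C ?z f)) n" using e n by simp
  also have "\<dots> = add C (cmp C ?z f) (add C (cmp C ?z f) n)"
    using add_assoc a c zf n by blast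
  also have "\<dots> = cmp C ?z f" using n add_zer a c zf by simp
  finally show ?thesis by simp
qed

lemma zer_right:
  assumes f: "f \<in> hom C b c" and a: "a \<in> Obj C"
  shows "cmp C f (zer C a b) = zer C a c"
proof -
  have b: "b \<in> Obj C" and c: "c \<in> Obj C" using hom_obj[OF f] by auto
  let ?z = "zer C a b"
  have z: "?z \<in> hom C a b" using zer_in b a by auto
  have zz: "add C ?z ?z = ?z" using add_zer b a z by blast
  have d: "cmp C f (add C ?z ?z) = add C (cmp C f ?z) (cmp C f ?z)"
    using distl a b c f z by blast
  have zf: "cmp C f ?z \<in> hom C a c" using comp_in f z by auto
  then obtain n where n: "n \<in> hom C a c" "add C (cmp C f ?z) n = zer C a c"
    using add_inv a c by blast
  have e: "cmp C f ?z = add C (cmp C f ?z) (cmp C f ?z)" using d zz by simp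
  have "zer C a c = add C (add C (cmp C f ?z) (cmp C f ?z)) n" using e n by simp
  also have "\<dots> = add C (cmp C f ?z) (add C (cmp C f ?z) n)"
    using add_assoc a c zf n by blast
  also have "\<dots> = cmp C f ?z" using n add_zer a c zf by simp
  finally show ?thesis by simp
qed

lemma ker_univ: "is_kernel C k f \<Longrightarrow> (\<forall>x\<in>Mor C. cod C x = dom C f \<longrightarrow> cmp C f x = zer C (dom C x) (cod C f) \<longrightarrow>
        (\<exists>!u. u \<in> hom C (dom C x) (dom C k) \<and> cmp C k u = x))"
  unfolding is_kernel_def by (elim conjE)
lemma coker_univ: "is_cokernel C c f \<Longrightarrow> (\<forall>x\<in>Mor C. dom C x = cod C f \<longrightarrow> cmp C x f = zer C (dom C f) (cod C x) \<longrightarrow>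
        (\<exists>!u. u \<in> hom C (cod C c) (cod C x) \<and> cmp C u c = x))"
  unfolding is_cokernel_def by (elim conjE)

lemma ker_basic: "is_kernel C k g \<Longrightarrow> k \<in> hom C (dom C k) (dom C g) \<and> g \<in> hom C (dom C g) (cod C g) \<and> cmp C g k = zer C (dom C k) (cod C g)"
  unfolding is_kernel_def hom_def apply (elim conjE) apply (intro conjI CollectI) apply (assumption | rule refl)+ done
lemma coker_basic: "is_cokernel C c f \<Longrightarrow> c \<in> hom C (cod C f) (cod C c) \<and> f \<in> hom C (dom C f) (cod C f) \<and> cmp C c f = zer C (dom C f) (cod C c)"
  unfolding is_cokernel_def hom_def apply (elim conjE) apply (intro conjI CollectI) apply (assumption | rule refl)+ done

lemma ex1_eq: "\<exists>!u. P u \<Longrightarrow> P a \<Longrightarrow> P b \<Longrightarrow> a = b" by blast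

lemma ker_univ': assumes k: "is_kernel C k g" and x: "x \<in> hom C d (dom C g)" and z: "cmp C g x = zer C d (cod C g)"
  shows "\<exists>!u. u \<in> hom C d (dom C k) \<and> cmp C k u = x"
proof -
  have "x \<in> Mor C" "cod C x = dom C g" "dom C x = d" using x by (simp_all add: hom_def)
  then show ?thesis using ker_univ[OF k, THEN bspec[of _ _ x]] z by simp
qed

lemma coker_univ': assumes c: "is_cokernel C c f" and x: "x \<in> hom C (cod C f) d" and z: "cmp C x f = zer C (dom C f) d"
  shows "\<exists>!u. u \<in> hom C (cod C c) d \<and> cmp C u c = x"
proof -
  have "x \<in> Mor C" "dom C x = cod C f" "cod C x = d" using x by (simp_all add: hom_def)
  then show ?thesis using coker_univ[OF c, THEN bspec[of _ _ x]] z by simp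
qed

lemma ker_mono:
  assumes k: "is_kernel C k g" and u1: "u1 \<in> hom C d (dom C k)" and u2: "u2 \<in> hom C d (dom C k)"
    and eq: "cmp C k u1 = cmp C k u2"
  shows "u1 = u2"
proof -
  note kb = ker_basic[OF k]
  have x: "cmp C k u1 \<in> hom C d (dom C g)" using comp_in[OF u1] kb by blast
  have "cmp C g (cmp C k u1) = cmp C (cmp C g k) u1" using assoc[OF u1] kb by blast
  also have "\<dots> = zer C d (cod C g)" using kb zer_left[OF u1] hom_obj[of g "dom C g" "cod C g"] by simp
  finally have z: "cmp C g (cmp C k u1) = zer C d (cod C g)" .
  show ?thesis using ex1_eq[OF ker_univ'[OF k x z]] u1 u2 eq by simp
qed

lemma ker_lift:
  assumes k: "is_kernel C k g" and x: "x \<in> hom C d (dom C g)" and z: "cmp C g x = zer C d (cod C g)"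
  shows "\<exists>u \<in> hom C d (dom C k). cmp C k u = x"
  using ker_univ'[OF k x z] by blast

lemma coker_epi:
  assumes c: "is_cokernel C c f" and u1: "u1 \<in> hom C (cod C c) d" and u2: "u2 \<in> hom C (cod C c) d"
    and eq: "cmp C u1 c = cmp C u2 c"
  shows "u1 = u2"
proof -
  note kb = coker_basic[OF c]
  have x: "cmp C u1 c \<in> hom C (cod C f) d" using comp_in[OF _ u1] kb by blast
  have "cmp C (cmp C u1 c) f = cmp C u1 (cmp C c f)" using assoc[OF _ _ u1] kb by metis
  also have "\<dots> = zer C (dom C f) d" using kb zer_right[OF u1] hom_obj[of f "dom C f" "cod C f"] by simp
  finally have z: "cmp C (cmp C u1 c) f = zer C (dom C f) d" .
  show ?thesis using ex1_eq[OF coker_univ'[OF c x z]] u1 u2 eq by simp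
qed

lemma coker_desc:
  assumes c: "is_cokernel C c f" and x: "x \<in> hom C (cod C f) d" and z: "cmp C x f = zer C (dom C f) d"
  shows "\<exists>u \<in> hom C (cod C c) d. cmp C u c = x"
  using coker_univ'[OF c x z] by blast

lemma E_kc: "(i, p) \<in> E \<Longrightarrow> is_kernel C i p \<and> is_cokernel C p i"
  using conf unfolding conflation_category_def kernel_cokernel_pair_def by auto

lemma iso_intro: "f \<in> hom C a b \<Longrightarrow> g \<in> hom C b a \<Longrightarrow> cmp C g f = idm C a \<Longrightarrow> cmp C f g = idm C b \<Longrightarrow> iso C f"
  unfolding iso_def hom_def by auto

lemma iso_id: "a \<in> Obj C \<Longrightarrow> iso C (idm C a)"
  using iso_intro[of "idm C a" a a "idm C a"] id_in idl by auto

lemma E_closed: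
  assumes "(i, p) \<in> E" "i' \<in> hom C a' b'" "p' \<in> hom C b' c'"
    "\<alpha> \<in> hom C (dom C i) a'" "\<beta> \<in> hom C (cod C i) b'" "\<gamma> \<in> hom C (cod C p) c'"
    "iso C \<alpha>" "iso C \<beta>" "iso C \<gamma>" "cmp C i' \<alpha> = cmp C \<beta> i" "cmp C p' \<beta> = cmp C \<gamma> p"
  shows "(i', p') \<in> E"
proof -
  have "\<forall>i p i' p'. (i, p) \<in> E \<longrightarrow> i' \<in> Mor C \<longrightarrow> p' \<in> Mor C \<longrightarrow> cod C i' = dom C p' \<longrightarrow>
        (\<exists>\<alpha> \<beta> \<gamma>. iso C \<alpha> \<and> iso C \<beta> \<and> iso C \<gamma> \<and>
           \<alpha> \<in> hom C (dom C i) (dom C i') \<and> \<beta> \<in> hom C (cod C i) (cod C i') \<and>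
           \<gamma> \<in> hom C (cod C p) (cod C p') \<and>
           cmp C i' \<alpha> = cmp C \<beta> i \<and> cmp C p' \<beta> = cmp C \<gamma> p) \<longrightarrow>
        (i', p') \<in> E" using conf unfolding conflation_category_def by blast
  moreover have "i' \<in> Mor C" "p' \<in> Mor C" "cod C i' = dom C p'" "dom C i' = a'" "cod C p' = c'" "cod C i' = b'"
    using assms(2,3) by (auto simp: hom_def)
  ultimately show ?thesis
    apply -
    apply (erule allE[of _ i], erule allE[of _ p], erule allE[of _ i'], erule allE[of _ p'])
    apply (erule impE, rule assms(1))
    apply (erule impE, assumption)+
    apply (erule mp)
    apply (rule exI[of _ \<alpha>], rule exI[of _ \<beta>], rule exI[of _ \<gamma>])
    using assms by simp
qed


lemma R2: "deflation C E p \<Longrightarrow> t \<in> Mor C \<Longrightarrow> cod C t = cod C p \<Longrightarrow> \<exists>p' t'. is_pullback C p t p' t' \<and> deflation C E p'"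
  using dexa unfolding deflation_exact_def by blast

lemma pb_basic: "is_pullback C p t p' t' \<Longrightarrow> p' \<in> hom C (dom C p') (dom C t) \<and> t' \<in> hom C (dom C p') (dom C p) \<and> cmp C p t' = cmp C t p'"
  unfolding is_pullback_def hom_def apply (elim conjE) apply (intro conjI CollectI) apply (assumption | rule refl | simp)+ done

lemma pb_univ: "is_pullback C p t p' t' \<Longrightarrow> (\<forall>x\<in>Mor C. \<forall>y\<in>Mor C. cod C x = dom C p \<longrightarrow> cod C y = dom C t \<longrightarrow> dom C x = dom C y \<longrightarrow>
        cmp C p x = cmp C t y \<longrightarrow>
        (\<exists>!u. u \<in> hom C (dom C x) (dom C p') \<and> cmp C t' u = x \<and> cmp C p' u = y))"
  unfolding is_pullback_def by (elim conjE)

lemma pb_univ': assumes P: "is_pullback C p t p' t'" and x: "x \<in> hom C d (dom C p)" and y: "y \<in> hom C d (dom C t)"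
  and e: "cmp C p x = cmp C t y"
  shows "\<exists>!u. u \<in> hom C d (dom C p') \<and> cmp C t' u = x \<and> cmp C p' u = y"
proof -
  have "x \<in> Mor C" "cod C x = dom C p" "dom C x = d" "y \<in> Mor C" "cod C y = dom C t" "dom C y = d"
    using x y by (simp_all add: hom_def)
  then show ?thesis using pb_univ[OF P, THEN bspec[of _ _ x], THEN bspec[of _ _ y]] e by simp
qed

lemma po_basic: "is_pushout C a b b' a' \<Longrightarrow> b' \<in> hom C (cod C a) (cod C b') \<and> a' \<in> hom C (cod C b) (cod C b') \<and> cmp C b' a = cmp C a' b"
  unfolding is_pushout_def hom_def apply (elim conjE) apply (intro conjI CollectI) apply (assumption | rule refl | simp)+ done

lemma po_univ: "is_pushout C a b b' a' \<Longrightarrow> (\<forall>x\<in>Mor C. \<forall>y\<in>Mor C. dom C x = cod C a \<longrightarrow> dom C y = cod C b \<longrightarrow> cod C x = cod C y \<longrightarrow>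
        cmp C x a = cmp C y b \<longrightarrow>
        (\<exists>!u. u \<in> hom C (cod C b') (cod C x) \<and> cmp C u b' = x \<and> cmp C u a' = y))"
  unfolding is_pushout_def by (elim conjE)

lemma po_univ': assumes P: "is_pushout C a b b' a'" and x: "x \<in> hom C (cod C a) d" and y: "y \<in> hom C (cod C b) d"
  and e: "cmp C x a = cmp C y b"
  shows "\<exists>!u. u \<in> hom C (cod C b') d \<and> cmp C u b' = x \<and> cmp C u a' = y"
proof -
  have "x \<in> Mor C" "dom C x = cod C a" "cod C x = d" "y \<in> Mor C" "dom C y = cod C b" "cod C y = d"
    using x y by (simp_all add: hom_def)
  then show ?thesis using po_univ[OF P, THEN bspec[of _ _ x], THEN bspec[of _ _ y]] e by simp
qed

lemma main:
  assumes A3: "axiom_A3 C E Asub" and k: "is_kernel C k g" and KA: "dom C k \<in> Asub"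
    and jf: "(j, f) \<in> E" and ig: "(i0, cmp C g f) \<in> E" and gM: "g \<in> Mor C" and fg: "cod C f = dom C g"
  shows "(k, g) \<in> E"
proof -
  define X where "X = dom C f"
  define Y where "Y = dom C g"
  define Z where "Z = cod C g"
  define K where "K = dom C k"
  define W where "W = dom C i0"
  define V where "V = dom C j"
  define gf where "gf = cmp C g f"
  have kb: "k \<in> hom C K Y" "g \<in> hom C Y Z" "cmp C g k = zer C K Z"
    using ker_basic[OF k] by (simp_all add: K_def Y_def Z_def)
  have jfc: "is_kernel C j f" "is_cokernel C f j" using E_kc[OF jf] by auto
  have fM: "f \<in> hom C X Y" using coker_basic[OF jfc(2)] fg by (auto simp: X_def Y_def hom_def)
  have jb: "j \<in> hom C V X" "cmp C f j = zer C V Y"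
    using ker_basic[OF jfc(1)] fg by (simp_all add: V_def X_def Y_def)
  have gfc: "is_kernel C i0 gf" "is_cokernel C gf i0" using E_kc[OF ig] gf_def by auto
  have gfh: "gf \<in> hom C X Z" using comp_in[OF fM kb(2)] gf_def by simp
  have gfd: "dom C gf = X" "cod C gf = Z" using gfh by (simp_all add: hom_def)
  have ib: "i0 \<in> hom C W X" "cmp C gf i0 = zer C W Z"
    using ker_basic[OF gfc(1)] gfd by (simp_all add: W_def)
  have oX: "X \<in> Obj C" and oY: "Y \<in> Obj C" and oZ: "Z \<in> Obj C" and oK: "K \<in> Obj C"
    and oW: "W \<in> Obj C" and oV: "V \<in> Obj C"
    using hom_obj[OF fM] hom_obj[OF kb(2)] hom_obj[OF kb(1)] hom_obj[OF ib(1)] hom_obj[OF jb(1)] by auto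
  have hd: "\<And>x a b. x \<in> hom C a b \<Longrightarrow> dom C x = a \<and> cod C x = b" by (simp add: hom_def)

  have dff: "deflation C E f" using jf by (auto simp: deflation_def)
  obtain f' k' where pb: "is_pullback C f k f' k'" and df': "deflation C E f'"
    using R2[OF dff, of k] kb(1) fM hd by (metis homD)
  define P' where "P' = dom C f'"
  have pbb: "f' \<in> hom C P' K" "k' \<in> hom C P' X" "cmp C f k' = cmp C k f'"
    using pb_basic[OF pb] hd[OF kb(1)] hd[OF fM] by (simp_all add: P'_def)
  have oP': "P' \<in> Obj C" using hom_obj[OF pbb(1)] by auto

  have "cmp C gf k' = cmp C g (cmp C f k')" using assoc[OF pbb(2) fM kb(2)] gf_def by simp
  also have "\<dots> = cmp C g (cmp C k f')" using pbb(3) by simp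
  also have "\<dots> = cmp C (cmp C g k) f'" using assoc[OF pbb(1) kb(1) kb(2)] by simp
  also have "\<dots> = zer C P' Z" using kb(3) zer_left[OF pbb(1) oZ] by simp
  finally have gfk': "cmp C gf k' = zer C P' Z" .
  obtain u where u: "u \<in> hom C P' W" "cmp C i0 u = k'"
    using ker_lift[OF gfc(1), of k' P'] pbb(2) gfk' gfd by (auto simp: W_def)
  have fi0h: "cmp C f i0 \<in> hom C W Y" using comp_in[OF ib(1) fM] .
  have fi0: "cmp C g (cmp C f i0) = zer C W Z"
    using assoc[OF ib(1) fM kb(2)] ib(2) gf_def by simp
  obtain h where h: "h \<in> hom C W K" "cmp C k h = cmp C f i0"
    using ker_lift[OF k, of "cmp C f i0" W] fi0h fi0 by (auto simp: Y_def Z_def K_def)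
  have "\<exists>!v. v \<in> hom C W P' \<and> cmp C k' v = i0 \<and> cmp C f' v = h"
    using pb_univ'[OF pb, of i0 W h] ib(1) h hd[OF kb(1)] hd[OF fM] by (simp add: P'_def)
  then obtain v where v: "v \<in> hom C W P'" "cmp C k' v = i0" "cmp C f' v = h" by blast
  have uvh: "cmp C u v \<in> hom C W W" using comp_in[OF v(1) u(1)] .
  have "cmp C i0 (cmp C u v) = cmp C i0 (idm C W)"
    using assoc[OF v(1) u(1) ib(1)] u(2) v(2) idr[OF ib(1)] by simp
  then have uv: "cmp C u v = idm C W"
    using ker_mono[OF gfc(1) uvh[unfolded W_def] id_in[OF oW, unfolded W_def]] by (simp add: W_def)
  have huh: "cmp C h u \<in> hom C P' K" using comp_in[OF u(1) h(1)] .
  have "cmp C k (cmp C h u) = cmp C k f'"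
    using assoc[OF u(1) h(1) kb(1)] h(2) assoc[OF u(1) ib(1) fM] u(2) pbb(3) by simp
  then have hu: "cmp C h u = f'" using ker_mono[OF k huh[unfolded K_def] pbb(1)[unfolded K_def]] by simp
  have vuh: "cmp C v u \<in> hom C P' P'" using comp_in[OF u(1) v(1)] .
  have "\<exists>!w. w \<in> hom C P' P' \<and> cmp C k' w = k' \<and> cmp C f' w = f'"
    using pb_univ'[OF pb, of k' P' f'] pbb hd[OF kb(1)] hd[OF fM] by (simp add: P'_def)
  moreover have "cmp C k' (cmp C v u) = k'" using assoc[OF u(1) v(1) pbb(2)] v(2) u(2) by simp
  moreover have "cmp C f' (cmp C v u) = f'" using assoc[OF u(1) v(1) pbb(1)] v(3) hu by simp
  ultimately have vu: "cmp C v u = idm C P'"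
    using ex1_eq[of "\<lambda>w. w \<in> hom C P' P' \<and> cmp C k' w = k' \<and> cmp C f' w = f'"]
      vuh id_in[OF oP'] idr[OF pbb(1)] idr[OF pbb(2)] by blast
  have E1: "(k', gf) \<in> E"
    apply (rule E_closed[OF ig[folded gf_def] pbb(2) gfh, of v "idm C X" "idm C Z"])
    using v(1) id_in[OF oX] id_in[OF oZ] hd[OF ib(1)] gfd
        iso_intro[OF v(1) u(1) uv vu] iso_id[OF oX] iso_id[OF oZ] v(2) idl[OF ib(1)]
        idr[OF gfh] idl[OF gfh] by simp_all
  have gfc2: "is_cokernel C gf k'" using E_kc[OF E1] by simp

  have "inflation C E k'" using E1 by (auto simp: inflation_def)
  moreover have "dom C k' = dom C f'" "cod C f' \<in> Asub" using hd[OF pbb(1)] hd[OF pbb(2)] KA K_def by auto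
  ultimately obtain h' i' where po: "is_pushout C k' f' h' i'" and ii': "inflation C E i'"
    using A3 df' unfolding axiom_A3_def by blast
  define P where "P = cod C h'"
  have pob: "h' \<in> hom C X P" "i' \<in> hom C K P" "cmp C h' k' = cmp C i' f'"
    using po_basic[OF po] hd[OF pbb(1)] hd[OF pbb(2)] by (simp_all add: P_def)
  have oP: "P \<in> Obj C" using hom_obj[OF pob(1)] by auto
  obtain c where ic: "(i', c) \<in> E" using ii' by (auto simp: inflation_def)
  have icc: "is_kernel C i' c" "is_cokernel C c i'" using E_kc[OF ic] by auto
  define Cc where "Cc = cod C c"
  have cb: "c \<in> hom C P Cc" "cmp C c i' = zer C K Cc"
    using coker_basic[OF icc(2)] hd[OF pob(2)] by (simp_all add: Cc_def)
  have oCc: "Cc \<in> Obj C" using hom_obj[OF cb(1)] by auto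

  have "\<exists>!w. w \<in> hom C P Y \<and> cmp C w h' = f \<and> cmp C w i' = k"
    using po_univ'[OF po, of f Y k] fM kb(1) pbb(3) hd[OF pbb(1)] hd[OF pbb(2)] by (simp add: P_def)
  then obtain \<phi> where phi: "\<phi> \<in> hom C P Y" "cmp C \<phi> h' = f" "cmp C \<phi> i' = k" by blast
  have gphi: "cmp C g \<phi> \<in> hom C P Z" using comp_in[OF phi(1) kb(2)] .
  have "cmp C (cmp C g \<phi>) i' = zer C K Z" using assoc[OF pob(2) phi(1) kb(2)] phi(3) kb(3) by simp
  then obtain \<gamma> where gam: "\<gamma> \<in> hom C Cc Z" "cmp C \<gamma> c = cmp C g \<phi>"
    using coker_desc[OF icc(2), of "cmp C g \<phi>" Z] gphi hd[OF pob(2)] by (auto simp: Cc_def)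
  have chh: "cmp C c h' \<in> hom C X Cc" using comp_in[OF pob(1) cb(1)] .
  have "cmp C (cmp C c h') k' = cmp C c (cmp C h' k')" using assoc[OF pbb(2) pob(1) cb(1)] by simp
  also have "\<dots> = cmp C (cmp C c i') f'" using pob(3) assoc[OF pbb(1) pob(2) cb(1)] by simp
  also have "\<dots> = zer C P' Cc" using cb(2) zer_left[OF pbb(1) oCc] by simp
  finally have chk: "cmp C (cmp C c h') k' = zer C P' Cc" .
  obtain \<delta> where del: "\<delta> \<in> hom C Z Cc" "cmp C \<delta> gf = cmp C c h'"
    using coker_desc[OF gfc2, of "cmp C c h'" Cc] chh chk hd[OF pbb(2)] gfd by auto
  have dgph: "cmp C \<delta> (cmp C g \<phi>) \<in> hom C P Cc" using comp_in[OF gphi del(1)] .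
  have e1: "cmp C (cmp C \<delta> (cmp C g \<phi>)) h' = cmp C c h'"
    using assoc[OF pob(1) gphi del(1)] assoc[OF pob(1) phi(1) kb(2)] phi(2) del(2) gf_def by simp
  have e2: "cmp C (cmp C \<delta> (cmp C g \<phi>)) i' = cmp C c i'"
    using assoc[OF pob(2) gphi del(1)] assoc[OF pob(2) phi(1) kb(2)] phi(3) kb(3) cb(2)
      zer_right[OF del(1) oK] by simp
  have "\<exists>!w. w \<in> hom C P Cc \<and> cmp C w h' = cmp C c h' \<and> cmp C w i' = cmp C c i'"
    using po_univ'[OF po, of "cmp C c h'" Cc "cmp C c i'"] chh comp_in[OF pob(2) cb(1)]
      assoc[OF pbb(2) pob(1) cb(1)] assoc[OF pbb(1) pob(2) cb(1)] pob(3)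
      hd[OF pbb(1)] hd[OF pbb(2)] by (simp add: P_def)
  then have dgphi: "cmp C \<delta> (cmp C g \<phi>) = c"
    using ex1_eq[of "\<lambda>w. w \<in> hom C P Cc \<and> cmp C w h' = cmp C c h' \<and> cmp C w i' = cmp C c i'"]
      dgph e1 e2 cb(1) by blast
  have "cmp C (cmp C \<delta> \<gamma>) c = cmp C (idm C Cc) c"
    using assoc[OF cb(1) gam(1) del(1)] gam(2) dgphi idl[OF cb(1)] by simp
  then have dg: "cmp C \<delta> \<gamma> = idm C Cc"
    using coker_epi[OF icc(2), of "cmp C \<delta> \<gamma>" Cc "idm C Cc"] comp_in[OF gam(1) del(1)] id_in[OF oCc]
    by (simp add: Cc_def)
  have "cmp C (cmp C \<gamma> \<delta>) gf = cmp C (idm C Z) gf"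
    using assoc[OF gfh del(1) gam(1)] del(2) assoc[OF pob(1) cb(1) gam(1)] gam(2)
      assoc[OF pob(1) phi(1) kb(2)] phi(2) gf_def idl[OF gfh] by simp
  then have gd: "cmp C \<gamma> \<delta> = idm C Z"
    using coker_epi[OF gfc2, of "cmp C \<gamma> \<delta>" Z "idm C Z"] comp_in[OF del(1) gam(1)] id_in[OF oZ] gfd
    by simp
  have h'jh: "cmp C h' j \<in> hom C V P" using comp_in[OF jb(1) pob(1)] .
  have "cmp C c (cmp C h' j) = cmp C \<delta> (cmp C gf j)"
    using assoc[OF jb(1) pob(1) cb(1)] del(2) assoc[OF jb(1) gfh del(1)] by simp
  also have "\<dots> = zer C V Cc"
    using assoc[OF jb(1) fM kb(2)] gf_def jb(2) zer_right[OF kb(2) oV] zer_right[OF del(1) oV] by simp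
  finally have chj: "cmp C c (cmp C h' j) = zer C V Cc" .
  obtain m where m: "m \<in> hom C V K" "cmp C i' m = cmp C h' j"
    using ker_lift[OF icc(1), of "cmp C h' j" V] h'jh chj hd[OF pob(2)] hd[OF cb(1)] by auto
  have "cmp C k m = cmp C k (zer C V K)"
    using assoc[OF m(1) pob(2) phi(1)] phi(3) m(2) assoc[OF jb(1) pob(1) phi(1)] phi(2) jb(2)
      zer_right[OF kb(1) oV] by simp
  then have "m = zer C V K" using ker_mono[OF k m(1)[unfolded K_def]] zer_in[OF oV oK] K_def by simp
  then have h'j: "cmp C h' j = zer C V P" using m(2) zer_right[OF pob(2) oV] by simp
  obtain \<psi> where psi: "\<psi> \<in> hom C Y P" "cmp C \<psi> f = h'"
    using coker_desc[OF jfc(2), of h' P] pob(1) h'j hd[OF jb(1)] hd[OF fM] by auto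
  have "cmp C (cmp C \<phi> \<psi>) f = cmp C (idm C Y) f"
    using assoc[OF fM psi(1) phi(1)] psi(2) phi(2) idl[OF fM] by simp
  then have pp: "cmp C \<phi> \<psi> = idm C Y"
    using coker_epi[OF jfc(2), of "cmp C \<phi> \<psi>" Y "idm C Y"] comp_in[OF psi(1) phi(1)] id_in[OF oY] hd[OF fM]
    by simp
  have "cmp C (cmp C c \<psi>) f = cmp C (cmp C \<delta> g) f"
    using assoc[OF fM psi(1) cb(1)] psi(2) assoc[OF fM kb(2) del(1)] del(2) gf_def by simp
  then have cpsi: "cmp C c \<psi> = cmp C \<delta> g"
    using coker_epi[OF jfc(2), of "cmp C c \<psi>" Cc "cmp C \<delta> g"] comp_in[OF psi(1) cb(1)]
      comp_in[OF kb(2) del(1)] hd[OF fM] by simp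
  have psikh: "cmp C \<psi> k \<in> hom C K P" using comp_in[OF kb(1) psi(1)] .
  have "cmp C c (cmp C \<psi> k) = zer C K Cc"
    using assoc[OF kb(1) psi(1) cb(1)] cpsi assoc[OF kb(1) kb(2) del(1)] kb(3) zer_right[OF del(1) oK] by simp
  then obtain n where n: "n \<in> hom C K K" "cmp C i' n = cmp C \<psi> k"
    using ker_lift[OF icc(1), of "cmp C \<psi> k" K] psikh hd[OF pob(2)] hd[OF cb(1)] by auto
  have "cmp C k n = cmp C k (idm C K)"
    using assoc[OF n(1) pob(2) phi(1)] phi(3) n(2) assoc[OF kb(1) psi(1) phi(1)] pp idl[OF kb(1)] idr[OF kb(1)]
    by simp
  then have "n = idm C K" using ker_mono[OF k n(1)[unfolded K_def]] id_in[OF oK] K_def by simp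
  then have psik: "cmp C \<psi> k = i'" using n(2) idr[OF pob(2)] by simp
  have "\<exists>!w. w \<in> hom C P P \<and> cmp C w h' = h' \<and> cmp C w i' = i'"
    using po_univ'[OF po, of h' P i'] pob hd[OF pbb(1)] hd[OF pbb(2)] by (simp add: P_def)
  moreover have "cmp C (cmp C \<psi> \<phi>) h' = h'" using assoc[OF pob(1) phi(1) psi(1)] phi(2) psi(2) by simp
  moreover have "cmp C (cmp C \<psi> \<phi>) i' = i'" using assoc[OF pob(2) phi(1) psi(1)] phi(3) psik by simp
  ultimately have pp2: "cmp C \<psi> \<phi> = idm C P"
    using ex1_eq[of "\<lambda>w. w \<in> hom C P P \<and> cmp C w h' = h' \<and> cmp C w i' = i'"]
      comp_in[OF phi(1) psi(1)] id_in[OF oP] idl[OF pob(1)] idl[OF pob(2)] by blast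
  show ?thesis
    apply (rule E_closed[OF ic kb(1) kb(2), of "idm C K" \<phi> \<gamma>])
    using id_in[OF oK] phi(1) gam(1) hd[OF pob(2)] hd[OF cb(1)] iso_id[OF oK]
      iso_intro[OF phi(1) psi(1) pp2 pp] iso_intro[OF gam(1) del(1) dg gd] idr[OF kb(1)] phi(3) gam(2)
    by simp_all
qed

end

theorem mainTheorem5:
  fixes C :: "('o, 'm) cat" and E :: "('m \<times> 'm) set" and Asub :: "'o set"
    and f g :: 'm
  assumes "deflation_exact C E"
    and "Asub \<subseteq> Obj C" and "Asub \<noteq> {}"
    and "axiom_A3 C E Asub"
    and "g \<in> Mor C"
    and "\<exists>k. is_kernel C k g \<and> dom C k \<in> Asub"
    and "deflation C E f" and "cod C f = dom C g"
    and "deflation C E (cmp C g f)"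
  shows "deflation C E g"
proof -
  interpret dex C E using assms(1) by (rule dex.intro)
  obtain k where k: "is_kernel C k g" "dom C k \<in> Asub" using assms(6) by blast
  obtain j where j: "(j, f) \<in> E" using assms(7) by (auto simp: deflation_def)
  obtain i0 where i0: "(i0, cmp C g f) \<in> E" using assms(9) by (auto simp: deflation_def)
  have "(k, g) \<in> E" using main[OF assms(4) k(1) k(2) j i0 assms(5) assms(8)] .
  then show ?thesis by (auto simp: deflation_def)
qed

end
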